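(* Let $k$ be a commutative ring, $P$ an invertible $k$-module, $Q=P^*$, and $A$ a $P$-Frobenius $k$-algebra with Frobenius system $(\psi,x_i,q_i,y_i)$. Then $A$ is a separable $k$-algebra if and only if there is $d=\sum_jp_j\otimes a_j\in P\otimes_kA$ such that \[ \sum_{i,j}x_i\,q_i(p_j)\,a_j\,y_i=1_A. \]
   Context: $A$ is $P$-Frobenius if it is finitely generated projective over $k$ and $A_A\cong\mathrm{Hom}_k(A,P)_A$, where $(\psi a)(x)=\psi(ax)$. A Frobenius system consists of $\psi\in\mathrm{Hom}_k(A,P)$ such that $a\mapsto\psi a$ is an isomorphism $A\to\mathrm{Hom}_k(A,P)$, and finitely many $x_i,y_i\in A$, $q_i\in Q$ with $\sum_ix_i\,q_i(\psi(y_ia))=a$ and $\sum_iq_i(\psi(ax_i))\,y_i=a$ for all $a\in A$. *)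

theory Defs
  imports Complex_Main "HOL-Library.Function_Algebras"
begin

text \<open>Modules over a commutative ring k (type 'k) are given, as in HOL.Modules,
by a scalar multiplication on an abelian group type.  k-linear maps are
module_hom.\<close>

definition dual_space :: "('k::comm_ring_1 \<Rightarrow> 'm::ab_group_add \<Rightarrow> 'm) \<Rightarrow> ('m \<Rightarrow> 'k) set" where
  "dual_space s = {f. module_hom s (*) f}"

text \<open>Finitely generated projective (dual basis form: retract of k^n).\<close>
definition fg_projective :: "('k::comm_ring_1 \<Rightarrow> 'm::ab_group_add \<Rightarrow> 'm) \<Rightarrow> bool" where
  "fg_projective s \<longleftrightarrow> module s \<and>
     (\<exists>(n::nat) (e::nat \<Rightarrow> 'm) (f::nat \<Rightarrow> 'm \<Rightarrow> 'k).
        (\<forall>i<n. f i \<in> dual_space s) \<and> (\<forall>m. m = (\<Sum>i<n. s (f i m) (e i))))"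

text \<open>Tensor product M \<otimes>_k N of submodules M, N (carriers) of modules,
constructed as the free k-module on M \<times> N (finitely supported functions)
modulo the bilinearity relations.  An element of M \<otimes> N is represented by a
finite list of pairs (m,n), standing for the sum of the pure tensors m \<otimes> n.\<close>

definition tdelta :: "'m \<times> 'n \<Rightarrow> ('m \<times> 'n \<Rightarrow> 'k::comm_ring_1)" where
  "tdelta z = (\<lambda>w. if w = z then 1 else 0)"

definition fscale :: "'k::comm_ring_1 \<Rightarrow> ('x \<Rightarrow> 'k) \<Rightarrow> ('x \<Rightarrow> 'k)" where
  "fscale c f = (\<lambda>w. c * f w)"

definition tensor_relations ::
  "('k::comm_ring_1 \<Rightarrow> 'm::ab_group_add \<Rightarrow> 'm) \<Rightarrow> 'm set \<Rightarrow>
   ('k \<Rightarrow> 'n::ab_group_add \<Rightarrow> 'n) \<Rightarrow> 'n set \<Rightarrow> ('m \<times> 'n \<Rightarrow> 'k) set" where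
  "tensor_relations sM M sN N =
     {tdelta (m + m', n) - tdelta (m, n) - tdelta (m', n) | m m' n. m \<in> M \<and> m' \<in> M \<and> n \<in> N}
   \<union> {tdelta (m, n + n') - tdelta (m, n) - tdelta (m, n') | m n n'. m \<in> M \<and> n \<in> N \<and> n' \<in> N}
   \<union> {tdelta (sM c m, n) - fscale c (tdelta (m, n)) | c m n. m \<in> M \<and> n \<in> N}
   \<union> {tdelta (m, sN c n) - fscale c (tdelta (m, n)) | c m n. m \<in> M \<and> n \<in> N}"

definition formal_sum :: "('m \<times> 'n) list \<Rightarrow> ('m \<times> 'n \<Rightarrow> 'k::comm_ring_1)" where
  "formal_sum xs = sum_list (map tdelta xs)"

definition tensor_eq ::
  "('k::comm_ring_1 \<Rightarrow> 'm::ab_group_add \<Rightarrow> 'm) \<Rightarrow> 'm set \<Rightarrow>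
   ('k \<Rightarrow> 'n::ab_group_add \<Rightarrow> 'n) \<Rightarrow> 'n set \<Rightarrow> ('m \<times> 'n) list \<Rightarrow> ('m \<times> 'n) list \<Rightarrow> bool" where
  "tensor_eq sM M sN N xs ys \<longleftrightarrow> set xs \<subseteq> M \<times> N \<and> set ys \<subseteq> M \<times> N \<and>
     (formal_sum xs - formal_sum ys :: 'm \<times> 'n \<Rightarrow> 'k)
        \<in> module.span (fscale :: 'k \<Rightarrow> _) (tensor_relations sM M sN N)"

text \<open>Invertible k-module: finitely generated projective and the evaluation
map P \<otimes>_k P* \<rightarrow> k, p \<otimes> q \<mapsto> q(p), is an isomorphism.\<close>
definition invertible_module :: "('k::comm_ring_1 \<Rightarrow> 'p::ab_group_add \<Rightarrow> 'p) \<Rightarrow> bool" where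
  "invertible_module s \<longleftrightarrow> fg_projective s \<and>
     (\<forall>c::'k. \<exists>ts. set ts \<subseteq> UNIV \<times> dual_space s \<and> (\<Sum>(p,q)\<leftarrow>ts. q p) = c) \<and>
     (\<forall>ts us. set ts \<subseteq> UNIV \<times> dual_space s \<longrightarrow> set us \<subseteq> UNIV \<times> dual_space s \<longrightarrow>
        (\<Sum>(p,q)\<leftarrow>ts. q p) = (\<Sum>(p,q)\<leftarrow>us. q p) \<longrightarrow>
        tensor_eq s UNIV (fscale :: 'k \<Rightarrow> ('p \<Rightarrow> 'k) \<Rightarrow> _) (dual_space s) ts us)"

definition k_algebra :: "('k::comm_ring_1 \<Rightarrow> 'a::ring_1 \<Rightarrow> 'a) \<Rightarrow> bool" where
  "k_algebra s \<longleftrightarrow> module s \<and> (\<forall>c a b. s c (a * b) = s c a * b \<and> s c (a * b) = a * s c b)"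

definition separable_algebra :: "('k::comm_ring_1 \<Rightarrow> 'a::ring_1 \<Rightarrow> 'a) \<Rightarrow> bool" where
  "separable_algebra s \<longleftrightarrow> (\<exists>es :: ('a \<times> 'a) list.
     (\<Sum>(u,v)\<leftarrow>es. u * v) = 1 \<and>
     (\<forall>a. tensor_eq s UNIV s UNIV (map (\<lambda>(u,v). (a * u, v)) es) (map (\<lambda>(u,v). (u, v * a)) es)))"

text \<open>P-Frobenius: A f.g. projective over k and A_A \<cong> Hom_k(A,P)_A, with
(\<psi> a)(x) = \<psi>(a x); every right A-linear map A \<rightarrow> Hom_k(A,P) is a \<mapsto> \<psi> a
for \<psi> the image of 1.\<close>
definition P_frobenius :: "('k::comm_ring_1 \<Rightarrow> 'p::ab_group_add \<Rightarrow> 'p) \<Rightarrow> ('k \<Rightarrow> 'a::ring_1 \<Rightarrow> 'a) \<Rightarrow> bool" where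
  "P_frobenius sP sA \<longleftrightarrow> fg_projective sA \<and>
     (\<exists>\<psi>. module_hom sA sP \<psi> \<and> bij_betw (\<lambda>a. \<lambda>z. \<psi> (a * z)) UNIV {f. module_hom sA sP f})"

definition frobenius_system ::
  "('k::comm_ring_1 \<Rightarrow> 'p::ab_group_add \<Rightarrow> 'p) \<Rightarrow> ('k \<Rightarrow> 'a::ring_1 \<Rightarrow> 'a) \<Rightarrow> ('a \<Rightarrow> 'p) \<Rightarrow>
   nat \<Rightarrow> (nat \<Rightarrow> 'a) \<Rightarrow> (nat \<Rightarrow> 'p \<Rightarrow> 'k) \<Rightarrow> (nat \<Rightarrow> 'a) \<Rightarrow> bool" where
  "frobenius_system sP sA \<psi> n x q y \<longleftrightarrow>
     module_hom sA sP \<psi> \<and> bij_betw (\<lambda>a. \<lambda>z. \<psi> (a * z)) UNIV {f. module_hom sA sP f} \<and>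
     (\<forall>i<n. q i \<in> dual_space sP) \<and>
     (\<forall>a. (\<Sum>i<n. sA (q i (\<psi> (y i * a))) (x i)) = a) \<and>
     (\<forall>a. (\<Sum>i<n. sA (q i (\<psi> (a * x i))) (y i)) = a)"

end

theory Submission
  imports Defs
begin


lemma module_fscale: "module (fscale :: 'k::comm_ring_1 \<Rightarrow> ('x \<Rightarrow> 'k) \<Rightarrow> _)"
  by unfold_locales (auto simp: fscale_def fun_eq_iff algebra_simps)

interpretation fs: module "fscale :: 'k::comm_ring_1 \<Rightarrow> ('x \<Rightarrow> 'k) \<Rightarrow> _"
  by (rule module_fscale)

definition supp :: "('x \<Rightarrow> 'k::zero) \<Rightarrow> 'x set" where "supp g = {w. g w \<noteq> 0}"

definition Phi :: "('k::comm_ring_1 \<Rightarrow> 'v::ab_group_add \<Rightarrow> 'v) \<Rightarrow> ('x \<Rightarrow> 'v) \<Rightarrow> ('x \<Rightarrow> 'k) \<Rightarrow> 'v" where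
  "Phi sV G g = (\<Sum>w\<in>supp g. sV (g w) (G w))"

context module begin
lemma Phi_S: assumes "finite S" "supp g \<subseteq> S" shows "Phi scale G g = (\<Sum>w\<in>S. scale (g w) (G w))"
  unfolding Phi_def using assms by (intro sum.mono_neutral_left) (auto simp: supp_def)

lemma Phi_add: assumes "finite (supp g)" "finite (supp h)"
  shows "finite (supp (g + h))" "Phi scale G (g + h) = Phi scale G g + Phi scale G h"
proof -
  let ?S = "supp g \<union> supp h"
  have s: "supp (g+h) \<subseteq> ?S" by (auto simp: supp_def)
  then show "finite (supp (g + h))" using assms finite_subset by blast
  have "Phi scale G (g + h) = (\<Sum>w\<in>?S. scale ((g+h) w) (G w))" using assms s by (intro Phi_S) auto
  also have "\<dots> = (\<Sum>w\<in>?S. scale (g w) (G w)) + (\<Sum>w\<in>?S. scale (h w) (G w))"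
    by (simp add: scale_left_distrib sum.distrib)
  also have "\<dots> = Phi scale G g + Phi scale G h" using assms
    by (subst (1 2) Phi_S[of ?S]) auto
  finally show "Phi scale G (g + h) = Phi scale G g + Phi scale G h" .
qed

lemma Phi_scale: assumes "finite (supp g)"
  shows "finite (supp (fscale c g))" "Phi scale G (fscale c g) = scale c (Phi scale G g)"
proof -
  have s: "supp (fscale c g) \<subseteq> supp g" by (auto simp: supp_def fscale_def)
  then show "finite (supp (fscale c g))" using assms finite_subset by blast
  have "Phi scale G (fscale c g) = (\<Sum>w\<in>supp g. scale (fscale c g w) (G w))" using assms s by (intro Phi_S) auto
  also have "\<dots> = scale c (Phi scale G g)"
    by (simp add: Phi_def fscale_def scale_sum_right)
  finally show "Phi scale G (fscale c g) = scale c (Phi scale G g)" .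
qed

lemma Phi_diff: assumes "finite (supp g)" "finite (supp h)"
  shows "finite (supp (g - h))" "Phi scale G (g - h) = Phi scale G g - Phi scale G h"
proof -
  let ?S = "supp g \<union> supp h"
  have s: "supp (g-h) \<subseteq> ?S" by (auto simp: supp_def)
  then show "finite (supp (g - h))" using assms finite_subset by blast
  have "Phi scale G (g - h) = (\<Sum>w\<in>?S. scale ((g-h) w) (G w))" using assms s by (intro Phi_S) auto
  also have "\<dots> = (\<Sum>w\<in>?S. scale (g w) (G w)) - (\<Sum>w\<in>?S. scale (h w) (G w))"
    by (simp add: scale_left_diff_distrib sum_subtractf)
  also have "\<dots> = Phi scale G g - Phi scale G h" using assms
    by (subst (1 2) Phi_S[of ?S]) auto
  finally show "Phi scale G (g - h) = Phi scale G g - Phi scale G h" .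
qed

lemma Phi_tdelta: "finite (supp (tdelta z :: _ \<Rightarrow> 'a))" "Phi scale G (tdelta z) = G z"
proof -
  have s: "supp (tdelta z) \<subseteq> {z}" by (auto simp: supp_def tdelta_def)
  then show "finite (supp (tdelta z))" using finite_subset by blast
  show "Phi scale G (tdelta z) = G z" using s by (subst Phi_S[of "{z}"]) (auto simp: tdelta_def)
qed

lemma Phi_zero: "Phi scale G 0 = 0" "finite (supp (0 :: _ \<Rightarrow> 'a))"
  by (auto simp: Phi_def supp_def)

lemma Phi_formal_sum: "finite (supp (formal_sum xs :: _ \<Rightarrow> 'a))" "Phi scale G (formal_sum xs) = (\<Sum>w\<leftarrow>xs. G w)"
proof (induction xs)
  case Nil
  then show "finite (supp (formal_sum [] :: _ \<Rightarrow> 'a))" "Phi scale G (formal_sum []) = (\<Sum>w\<leftarrow>[]. G w)"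
    by (auto simp: formal_sum_def Phi_zero)
next
  case (Cons a xs)
  have e: "formal_sum (a # xs) = tdelta a + formal_sum xs" by (simp add: formal_sum_def)
  show "finite (supp (formal_sum (a#xs) :: _ \<Rightarrow> 'a))" "Phi scale G (formal_sum (a#xs)) = (\<Sum>w\<leftarrow>a#xs. G w)"
    unfolding e proof -
    have f1: "finite (supp (tdelta a :: _ \<Rightarrow> 'a))" by (rule Phi_tdelta(1))
    show "finite (supp (tdelta a + formal_sum xs :: _ \<Rightarrow> 'a))" by (rule Phi_add(1)[OF f1 Cons.IH(1)])
    show "Phi scale G (tdelta a + formal_sum xs) = (\<Sum>w\<leftarrow>a#xs. G w)"
      using Phi_add(2)[OF f1 Cons.IH(1)] Cons.IH(2) Phi_tdelta(2) by simp
  qed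
qed

lemma tensor_bilinear:
  assumes addL: "\<And>m m' n. m\<in>M \<Longrightarrow> m'\<in>M \<Longrightarrow> n\<in>N \<Longrightarrow> F (m+m') n = F m n + F m' n"
  and addR: "\<And>m n n'. m\<in>M \<Longrightarrow> n\<in>N \<Longrightarrow> n'\<in>N \<Longrightarrow> F m (n+n') = F m n + F m n'"
  and scL: "\<And>c m n. m\<in>M \<Longrightarrow> n\<in>N \<Longrightarrow> F (sM c m) n = scale c (F m n)"
  and scR: "\<And>c m n. m\<in>M \<Longrightarrow> n\<in>N \<Longrightarrow> F m (sN c n) = scale c (F m n)"
  and te: "tensor_eq sM M sN N xs ys"
  shows "(\<Sum>(m,n)\<leftarrow>xs. F m n) = (\<Sum>(m,n)\<leftarrow>ys. F m n)"
proof -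
  let ?G = "\<lambda>(m,n). F m n"
  let ?P = "\<lambda>g. finite (supp g) \<and> Phi scale ?G g = 0"
  have sub: "fs.subspace (Collect ?P)"
    unfolding fs.subspace_def by (auto simp: Phi_zero Phi_add Phi_scale)
  have base: "?P r" if "r \<in> tensor_relations sM M sN N" for r
    using that unfolding tensor_relations_def
    by (auto simp: Phi_diff Phi_tdelta Phi_scale addL addR scL scR)
  have "formal_sum xs - formal_sum ys \<in> fs.span (tensor_relations sM M sN N)"
    using te unfolding tensor_eq_def by blast
  then have "?P (formal_sum xs - formal_sum ys)"
    by (rule fs.span_induct[OF _ sub]) (rule base)
  then have "Phi scale ?G (formal_sum xs) = Phi scale ?G (formal_sum ys)"
    using Phi_diff(2)[OF Phi_formal_sum(1)[of xs] Phi_formal_sum(1)[of ys], of ?G] by simp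
  then show ?thesis unfolding Phi_formal_sum(2) by (simp add: case_prod_beta')
qed
end


lemma rad_add:
  fixes c x y :: "'k::comm_ring_1"
  assumes "c * x^m = 0" "c * y^n = 0"
  shows "c * (x+y)^(m+n) = 0"
proof -
  have "c * (x+y)^(m+n) = (\<Sum>k\<le>m+n. c * (of_nat ((m+n) choose k) * x^k * y^(m+n-k)))"
    by (simp add: binomial_ring sum_distrib_left)
  also have "\<dots> = 0"
  proof (rule sum.neutral, rule ballI)
    fix k assume "k \<in> {..m+n}"
    show "c * (of_nat ((m+n) choose k) * x^k * y^(m+n-k)) = 0"
    proof (cases "m \<le> k")
      case True
      then have "x^k = x^m * x^(k-m)" by (metis le_add_diff_inverse power_add)
      then have "c * (of_nat ((m+n) choose k) * x^k * y^(m+n-k)) = (c * x^m) * (of_nat ((m+n) choose k) * x^(k-m) * y^(m+n-k))"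
        by (simp add: algebra_simps)
      then show ?thesis using assms(1) by simp
    next
      case False
      then have "y^(m+n-k) = y^n * y^(m+n-k-n)" by (metis le_add_diff_inverse power_add add.commute
          diff_le_mono le_add1 nat_le_linear add_diff_cancel_left' le_diff_conv2 less_imp_le_nat
          not_le)
      then have "c * (of_nat ((m+n) choose k) * x^k * y^(m+n-k)) = (c * y^n) * (of_nat ((m+n) choose k) * x^k * y^(m+n-k-n))"
        by (simp add: algebra_simps)
      then show ?thesis using assms(2) by simp
    qed
  qed
  finally show ?thesis .
qed

lemma rad_sum:
  fixes c :: "'k::comm_ring_1"
  assumes "finite A" "\<And>t. t \<in> A \<Longrightarrow> c * (g t)^2 = 0"
  shows "c * (sum g A)^(2 * card A + 1) = 0"
  using assms
proof (induction A rule: finite_induct)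
  case empty then show ?case by simp
next
  case (insert x F)
  have "c * (g x + sum g F)^(2 + (2 * card F + 1)) = 0"
    by (rule rad_add) (use insert in auto)
  then show ?case using insert by (simp add: algebra_simps)
qed

lemma sum_list_idx: "(\<Sum>x\<leftarrow>xs. h x) = (\<Sum>t<length xs. h (xs!t))"
  by (simp add: sum_list_sum_nth atLeast0LessThan)

lemma dualD:
  assumes "q \<in> dual_space s"
  shows "q (s c x) = c * q x" "q (x + y) = q x + q y" "q (sum g A) = (\<Sum>a\<in>A. q (g a))"
  using assms unfolding dual_space_def
  by (auto simp: module_hom.scale module_hom.add module_hom.sum)

lemma inv_comm:
  fixes sP :: "'k::comm_ring_1 \<Rightarrow> 'p::ab_group_add \<Rightarrow> 'p"
  assumes inv: "invertible_module sP" and qQ: "q \<in> dual_space sP" and q'Q: "q' \<in> dual_space sP"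
  shows "q z * q' p = q p * q' z"
proof -
  from inv have msP: "module sP" unfolding invertible_module_def fg_projective_def by blast
  from inv obtain n0 and e :: "nat \<Rightarrow> 'p" and f :: "nat \<Rightarrow> 'p \<Rightarrow> 'k" where fQ: "\<forall>i<n0. f i \<in> dual_space sP"
      and db: "\<forall>m. m = (\<Sum>i<n0. sP (f i m) (e i))"
    unfolding invertible_module_def fg_projective_def by blast
  from inv obtain ts where tsQ: "set ts \<subseteq> UNIV \<times> dual_space sP" and ts1: "(\<Sum>(p,q)\<leftarrow>ts. q p) = 1"
    unfolding invertible_module_def by blast
  from inv have inj: "\<And>ts us. set ts \<subseteq> UNIV \<times> dual_space sP \<Longrightarrow> set us \<subseteq> UNIV \<times> dual_space sP \<Longrightarrow>
        (\<Sum>(p,q)\<leftarrow>ts. q p) = (\<Sum>(p,q)\<leftarrow>us. q p) \<Longrightarrow>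
        tensor_eq sP UNIV (fscale :: 'k \<Rightarrow> ('p \<Rightarrow> 'k) \<Rightarrow> _) (dual_space sP) ts us"
    unfolding invertible_module_def by blast
  define N where "N = length ts"
  define pp where "pp t = fst (ts!t)" for t
  define qq where "qq t = snd (ts!t)" for t
  have qqQ: "qq t \<in> dual_space sP" if "t < N" for t
    using tsQ that unfolding qq_def N_def by (auto dest!: nth_mem)
  have sum1: "(\<Sum>t<N. qq t (pp t)) = 1"
    using ts1 unfolding sum_list_idx N_def pp_def qq_def by (simp add: case_prod_beta')
  define E where "E z = (\<Sum>t<N. sP (qq t z) (pp t))" for z
  have star: "sP (r z) p = sP (r p) (E z)" if rQ: "r \<in> dual_space sP" for r p z
  proof -
    let ?us = "map (\<lambda>(pt,qt). (sP (r p) pt, qt)) ts"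
    have te: "tensor_eq sP UNIV (fscale :: 'k \<Rightarrow> ('p \<Rightarrow> 'k) \<Rightarrow> _) (dual_space sP) [(p,r)] ?us"
    proof (rule inj)
      show "set [(p, r)] \<subseteq> UNIV \<times> dual_space sP" using rQ by auto
      show "set ?us \<subseteq> UNIV \<times> dual_space sP" using tsQ by auto
      have "(\<Sum>(a,b)\<leftarrow>?us. b a) = (\<Sum>t<N. qq t (sP (r p) (pp t)))"
        unfolding sum_list_idx N_def pp_def qq_def by (simp add: case_prod_beta')
      also have "\<dots> = (\<Sum>t<N. r p * qq t (pp t))" using qqQ by (simp add: dualD)
      also have "\<dots> = r p" using sum1 by (simp add: sum_distrib_left[symmetric])
      finally show "(\<Sum>(a,b)\<leftarrow>[(p,r)]. b a) = (\<Sum>(a,b)\<leftarrow>?us. b a)" by simp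
    qed
    have "(\<Sum>(a,b)\<leftarrow>[(p,r)]. sP (b z) a) = (\<Sum>(a,b)\<leftarrow>?us. sP (b z) a)"
      by (rule module.tensor_bilinear[OF msP, where F="\<lambda>a b. sP (b z) a" and M=UNIV and N="dual_space sP" and sM=sP and sN=fscale])
         (auto simp: module.scale_right_distrib[OF msP] module.scale_left_distrib[OF msP]
             module.scale_scale[OF msP] fscale_def mult.commute te)
    also have "(\<Sum>(a,b)\<leftarrow>?us. sP (b z) a) = (\<Sum>t<N. sP (qq t z) (sP (r p) (pp t)))"
      unfolding sum_list_idx N_def pp_def qq_def by (simp add: case_prod_beta')
    also have "\<dots> = sP (r p) (E z)"
      unfolding E_def by (simp add: module.scale_sum_right[OF msP] module.scale_scale[OF msP] mult.commute)
    finally show ?thesis by simp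
  qed
  define \<tau> where "\<tau> = (\<Sum>i<n0. f i (e i))"
  have Etau: "E z = sP \<tau> z" for z
  proof -
    have "E z = (\<Sum>t<N. sP (qq t (\<Sum>i<n0. sP (f i z) (e i))) (pp t))"
      unfolding E_def using db by metis
    also have "\<dots> = (\<Sum>t<N. \<Sum>i<n0. sP (f i z * qq t (e i)) (pp t))"
    proof (rule sum.cong[OF refl])
      fix t assume "t \<in> {..<N}"
      then have Q: "qq t \<in> dual_space sP" using qqQ by auto
      show "sP (qq t (\<Sum>i<n0. sP (f i z) (e i))) (pp t) = (\<Sum>i<n0. sP (f i z * qq t (e i)) (pp t))"
      proof -
        have "qq t (\<Sum>i<n0. sP (f i z) (e i)) = (\<Sum>i<n0. f i z * qq t (e i))"
          by (simp only: dualD(3)[OF Q] dualD(1)[OF Q])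
        then show ?thesis by (simp only: module.scale_sum_left[OF msP])
      qed
    qed
    also have "\<dots> = (\<Sum>i<n0. \<Sum>t<N. sP (f i z * qq t (e i)) (pp t))"
      by (rule sum.swap)
    also have "\<dots> = (\<Sum>i<n0. sP (f i z) (E (e i)))"
      unfolding E_def by (simp only: module.scale_sum_right[OF msP] module.scale_scale[OF msP])
    also have "\<dots> = (\<Sum>i<n0. sP (f i (e i)) z)"
    proof (rule sum.cong[OF refl])
      fix i assume "i \<in> {..<n0}"
      then have "f i \<in> dual_space sP" using fQ by auto
      from star[OF this, of "e i" z] show "sP (f i z) (E (e i)) = sP (f i (e i)) z" by simp
    qed
    also have "\<dots> = sP \<tau> z" unfolding \<tau>_def by (simp add: module.scale_sum_left[OF msP])
    finally show ?thesis .
  qed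
  have XY: "r z * r' p = r p * \<tau> * r' z" if "r \<in> dual_space sP" "r' \<in> dual_space sP" for r r' z p
  proof -
    have "sP (r z) p = sP (r p * \<tau>) z" using star[OF that(1)] Etau by (simp add: module.scale_scale[OF msP])
    then have "r' (sP (r z) p) = r' (sP (r p * \<tau>) z)" by simp
    then show ?thesis using that(2) by (simp add: dualD)
  qed
  have sq: "(1 - \<tau>) * (qq t (pp t))^2 = 0" if "t \<in> {..<N}" for t
    using XY[OF qqQ qqQ, of t t "pp t" "pp t"] that by (simp add: algebra_simps power2_eq_square)
  have "(1 - \<tau>) * (\<Sum>t<N. qq t (pp t))^(2 * card {..<N} + 1) = 0"
    by (rule rad_sum) (use sq in auto)
  then have "\<tau> = 1" using sum1 by simp
  then show ?thesis using XY[OF qQ q'Q, of z p] by simp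
qed


abbreviation "TR sM sN \<equiv> tensor_relations sM UNIV sN UNIV"

lemma sp_trans: "a - b \<in> fs.span S \<Longrightarrow> b - c \<in> fs.span S \<Longrightarrow> a - c \<in> fs.span S"
  using fs.span_add[of "a - b" S "b - c"] by simp

lemma sp_sum: "(\<And>i. i \<in> I \<Longrightarrow> g i - h i \<in> fs.span S) \<Longrightarrow> sum g I - sum h I \<in> fs.span S"
  using fs.span_sum[of I "\<lambda>i. g i - h i" S] by (simp add: sum_subtractf)

lemma sp_refl: "a = b \<Longrightarrow> a - b \<in> fs.span S"
  by (simp add: fs.span_zero)

lemma fscale_zero: "fscale 0 g = 0"
  by (simp add: fscale_def fun_eq_iff)

lemma L0:
  fixes sM :: "'k::comm_ring_1 \<Rightarrow> 'm::ab_group_add \<Rightarrow> 'm" and sN :: "'k \<Rightarrow> 'n::ab_group_add \<Rightarrow> 'n"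
  assumes "module sM" "module sN"
  shows "(tdelta (0, v) :: _ \<Rightarrow> 'k) \<in> fs.span (TR sM sN)" "(tdelta (u, 0) :: _ \<Rightarrow> 'k) \<in> fs.span (TR sM sN)"
proof -
  have "tdelta (sM 0 u, v) - fscale 0 (tdelta (u, v)) \<in> TR sM sN"
    unfolding tensor_relations_def by blast
  then show "(tdelta (0, v) :: _ \<Rightarrow> 'k) \<in> fs.span (TR sM sN)"
    using module.scale_zero_left[OF assms(1)] by (simp add: fscale_zero fs.span_base)
  have "tdelta (u, sN 0 v) - fscale 0 (tdelta (u, v)) \<in> TR sM sN"
    unfolding tensor_relations_def by blast
  then show "(tdelta (u, 0) :: _ \<Rightarrow> 'k) \<in> fs.span (TR sM sN)"
    using module.scale_zero_left[OF assms(2)] by (simp add: fscale_zero fs.span_base)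
qed

lemma L1:
  fixes sM :: "'k::comm_ring_1 \<Rightarrow> 'm::ab_group_add \<Rightarrow> 'm" and sN :: "'k \<Rightarrow> 'n::ab_group_add \<Rightarrow> 'n"
  assumes "module sM" "module sN" "finite K"
  shows "(tdelta (\<Sum>k\<in>K. u k, v) :: _ \<Rightarrow> 'k) - (\<Sum>k\<in>K. tdelta (u k, v)) \<in> fs.span (TR sM sN)"
  using assms(3)
proof (induction K rule: finite_induct)
  case empty then show ?case using L0[OF assms(1,2)] by simp
next
  case (insert k F)
  have r: "(tdelta (u k + sum u F, v) :: _ \<Rightarrow> 'k) - tdelta (u k, v) - tdelta (sum u F, v) \<in> fs.span (TR sM sN)"
    by (rule fs.span_base) (unfold tensor_relations_def, blast)
  have "(tdelta (u k + sum u F, v) :: _ \<Rightarrow> 'k) - (tdelta (u k, v) + (\<Sum>k\<in>F. tdelta (u k, v))) =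
     (tdelta (u k + sum u F, v) - tdelta (u k, v) - tdelta (sum u F, v)) + (tdelta (sum u F, v) - (\<Sum>k\<in>F. tdelta (u k, v)))"
    by (simp add: algebra_simps)
  then show ?case unfolding sum.insert[OF insert.hyps] by (simp only: fs.span_add[OF r insert.IH])
qed

lemma L2:
  fixes sM :: "'k::comm_ring_1 \<Rightarrow> 'm::ab_group_add \<Rightarrow> 'm" and sN :: "'k \<Rightarrow> 'n::ab_group_add \<Rightarrow> 'n"
  assumes "module sM" "module sN" "finite K"
  shows "(tdelta (u, \<Sum>k\<in>K. v k) :: _ \<Rightarrow> 'k) - (\<Sum>k\<in>K. tdelta (u, v k)) \<in> fs.span (TR sM sN)"
  using assms(3)
proof (induction K rule: finite_induct)
  case empty then show ?case using L0[OF assms(1,2)] by simp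
next
  case (insert k F)
  have r: "(tdelta (u, v k + sum v F) :: _ \<Rightarrow> 'k) - tdelta (u, v k) - tdelta (u, sum v F) \<in> fs.span (TR sM sN)"
    by (rule fs.span_base) (unfold tensor_relations_def, blast)
  have "(tdelta (u, v k + sum v F) :: _ \<Rightarrow> 'k) - (tdelta (u, v k) + (\<Sum>k\<in>F. tdelta (u, v k))) =
     (tdelta (u, v k + sum v F) - tdelta (u, v k) - tdelta (u, sum v F)) + (tdelta (u, sum v F) - (\<Sum>k\<in>F. tdelta (u, v k)))"
    by (simp add: algebra_simps)
  then show ?case unfolding sum.insert[OF insert.hyps] by (simp only: fs.span_add[OF r insert.IH])
qed

lemma L3:
  fixes sM :: "'k::comm_ring_1 \<Rightarrow> 'm::ab_group_add \<Rightarrow> 'm" and sN :: "'k \<Rightarrow> 'n::ab_group_add \<Rightarrow> 'n"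
  shows "(tdelta (sM c u, v) :: _ \<Rightarrow> 'k) - tdelta (u, sN c v) \<in> fs.span (TR sM sN)"
proof -
  have a: "(tdelta (sM c u, v) :: _ \<Rightarrow> 'k) - fscale c (tdelta (u, v)) \<in> fs.span (TR sM sN)"
    by (rule fs.span_base) (unfold tensor_relations_def, blast)
  have b: "(tdelta (u, sN c v) :: _ \<Rightarrow> 'k) - fscale c (tdelta (u, v)) \<in> fs.span (TR sM sN)"
    by (rule fs.span_base) (unfold tensor_relations_def, blast)
  show ?thesis using fs.span_diff[OF a b] by simp
qed

lemma sum_list_map_concat: "(\<Sum>w\<leftarrow>concat xss. h w) = (\<Sum>xs\<leftarrow>xss. \<Sum>w\<leftarrow>xs. h w)"
  by (induction xss) auto

lemma sum_list_concat_idx: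
  "(\<Sum>w\<leftarrow>concat (map (\<lambda>i. map (g i) [0..<m]) [0..<n]). h w) = (\<Sum>i<n. \<Sum>j<m. h (g i j))"
  by (simp add: sum_list_map_concat o_def sum_set_upt_conv_sum_list_nat[symmetric] atLeast0LessThan)



lemma dir1:
  fixes sP :: "'k::comm_ring_1 \<Rightarrow> 'p::ab_group_add \<Rightarrow> 'p"
    and sA :: "'k \<Rightarrow> 'a::ring_1 \<Rightarrow> 'a"
    and \<psi> :: "'a \<Rightarrow> 'p"
    and n :: nat and x y :: "nat \<Rightarrow> 'a" and q :: "nat \<Rightarrow> 'p \<Rightarrow> 'k"
  assumes alg: "k_algebra sA"
    and fsys: "frobenius_system sP sA \<psi> n x q y"
    and sep: "separable_algebra sA"
  shows "\<exists>(m::nat) (p::nat \<Rightarrow> 'p) (a::nat \<Rightarrow> 'a).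
       (\<Sum>i<n. \<Sum>j<m. x i * sA (q i (p j)) (a j) * y i) = 1"
proof -
  have msA: "module sA" and algL: "\<And>c a b. sA c (a * b) = sA c a * b" and algR: "\<And>c a b. sA c (a * b) = a * sA c b"
    using alg unfolding k_algebra_def by blast+
  have hom: "module_hom sA sP \<psi>" and qQ: "\<And>i. i < n \<Longrightarrow> q i \<in> dual_space sP"
    and id2: "\<And>a. (\<Sum>i<n. sA (q i (\<psi> (a * x i))) (y i)) = a"
    using fsys unfolding frobenius_system_def by auto
  have psi_add: "\<psi> (u + v) = \<psi> u + \<psi> v" and psi_sc: "\<psi> (sA c u) = sP c (\<psi> u)" for u v c
    using hom by (auto simp: module_hom.add module_hom.scale)
  from sep obtain es :: "('a \<times> 'a) list" where mu: "(\<Sum>(u,v)\<leftarrow>es. u * v) = 1"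
    and cen: "\<And>a. tensor_eq sA UNIV sA UNIV (map (\<lambda>(u,v). (a * u, v)) es) (map (\<lambda>(u,v). (u, v * a)) es)"
    unfolding separable_algebra_def by blast
  define m where "m = length es"
  define u where "u j = fst (es!j)" for j
  define v where "v j = snd (es!j)" for j
  have C: "(\<Sum>j<m. sA (q i (\<psi> (v j))) (x i * u j)) = (\<Sum>j<m. sA (q i (\<psi> (v j * x i))) (u j))"
    if "i < n" for i
  proof -
    have Q: "q i \<in> dual_space sP" using qQ that .
    have "(\<Sum>(a,b)\<leftarrow>map (\<lambda>(u,v). (x i * u, v)) es. sA (q i (\<psi> b)) a) =
          (\<Sum>(a,b)\<leftarrow>map (\<lambda>(u,v). (u, v * x i)) es. sA (q i (\<psi> b)) a)"
      by (rule module.tensor_bilinear[OF msA, where F="\<lambda>a b. sA (q i (\<psi> b)) a" and M=UNIV and N=UNIV and sM=sA and sN=sA])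
        (auto simp: module.scale_right_distrib[OF msA] module.scale_left_distrib[OF msA]
             module.scale_scale[OF msA] mult.commute cen psi_add psi_sc dualD[OF Q])
    then show ?thesis
      unfolding sum_list_idx m_def u_def v_def by (simp add: case_prod_beta')
  qed
  have "1 = (\<Sum>j<m. u j * v j)"
    using mu unfolding sum_list_idx m_def u_def v_def by (simp add: case_prod_beta')
  also have "\<dots> = (\<Sum>j<m. u j * (\<Sum>i<n. sA (q i (\<psi> (v j * x i))) (y i)))"
    using id2 by simp
  also have "\<dots> = (\<Sum>j<m. \<Sum>i<n. sA (q i (\<psi> (v j * x i))) (u j) * y i)"
    by (simp add: sum_distrib_left algL[symmetric] algR[symmetric])
  also have "\<dots> = (\<Sum>i<n. (\<Sum>j<m. sA (q i (\<psi> (v j * x i))) (u j)) * y i)"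
    by (subst sum.swap) (simp add: sum_distrib_right)
  also have "\<dots> = (\<Sum>i<n. (\<Sum>j<m. sA (q i (\<psi> (v j))) (x i * u j)) * y i)"
    using C by (intro sum.cong) auto
  also have "\<dots> = (\<Sum>i<n. \<Sum>j<m. x i * sA (q i (\<psi> (v j))) (u j) * y i)"
    by (simp add: sum_distrib_right algR[symmetric])
  finally show ?thesis by (intro exI[of _ m] exI[of _ "\<lambda>j. \<psi> (v j)"] exI[of _ u]) simp
qed


lemma dir2:
  fixes sP :: "'k::comm_ring_1 \<Rightarrow> 'p::ab_group_add \<Rightarrow> 'p"
    and sA :: "'k \<Rightarrow> 'a::ring_1 \<Rightarrow> 'a"
    and \<psi> :: "'a \<Rightarrow> 'p"
    and n :: nat and x y :: "nat \<Rightarrow> 'a" and q :: "nat \<Rightarrow> 'p \<Rightarrow> 'k"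
    and m :: nat and p :: "nat \<Rightarrow> 'p" and a :: "nat \<Rightarrow> 'a"
  assumes inv: "invertible_module sP"
    and alg: "k_algebra sA"
    and fsys: "frobenius_system sP sA \<psi> n x q y"
    and one: "(\<Sum>i<n. \<Sum>j<m. x i * sA (q i (p j)) (a j) * y i) = 1"
  shows "separable_algebra sA"
proof -
  have msA: "module sA" and algL: "\<And>c a b. sA c (a * b) = sA c a * b" and algR: "\<And>c a b. sA c (a * b) = a * sA c b"
    using alg unfolding k_algebra_def by blast+
  have qQ: "\<And>i. i < n \<Longrightarrow> q i \<in> dual_space sP"
    and id1: "\<And>a. (\<Sum>i<n. sA (q i (\<psi> (y i * a))) (x i)) = a"
    and id2: "\<And>a. (\<Sum>i<n. sA (q i (\<psi> (a * x i))) (y i)) = a"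
    using fsys unfolding frobenius_system_def by auto
  let ?R = "TR sA sA :: ('a \<times> 'a \<Rightarrow> 'k) set"
  have key: "(\<Sum>i<n. tdelta (b * x i, sA (q i pp) w * y i)) - (\<Sum>i<n. tdelta (x i, sA (q i pp) w * y i * b))
      \<in> fs.span ?R" for b w pp
  proof -
    define T where "T = (\<Sum>k<n. \<Sum>i<n. tdelta (x k, sA (q k (\<psi> (y k * b * x i)) * q i pp) (w * y i)) :: 'a \<times> 'a \<Rightarrow> 'k)"
    have lhs: "(\<Sum>i<n. tdelta (b * x i, sA (q i pp) w * y i)) - T \<in> fs.span ?R"
    proof -
      have "(\<Sum>i<n. tdelta (b * x i, sA (q i pp) w * y i)) -
            (\<Sum>i<n. \<Sum>k<n. tdelta (x k, sA (q k (\<psi> (y k * b * x i)) * q i pp) (w * y i))) \<in> fs.span ?R"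
      proof (rule sp_sum)
        fix i assume "i \<in> {..<n}"
        have e1: "b * x i = (\<Sum>k<n. sA (q k (\<psi> (y k * b * x i))) (x k))"
          using id1[of "b * x i"] by (simp add: mult.assoc)
        have s1: "tdelta (b * x i, sA (q i pp) w * y i) - (\<Sum>k<n. tdelta (sA (q k (\<psi> (y k * b * x i))) (x k), sA (q i pp) w * y i))
             \<in> fs.span ?R"
          unfolding e1 by (rule L1[OF msA msA]) simp
        have s2: "(\<Sum>k<n. tdelta (sA (q k (\<psi> (y k * b * x i))) (x k), sA (q i pp) w * y i)) -
             (\<Sum>k<n. tdelta (x k, sA (q k (\<psi> (y k * b * x i)) * q i pp) (w * y i))) \<in> fs.span ?R"
        proof (rule sp_sum)
          fix k assume "k \<in> {..<n}"
          have "sA (q k (\<psi> (y k * b * x i))) (sA (q i pp) w * y i) = sA (q k (\<psi> (y k * b * x i)) * q i pp) (w * y i)"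
            by (simp add: algL[symmetric] module.scale_scale[OF msA])
          then show "tdelta (sA (q k (\<psi> (y k * b * x i))) (x k), sA (q i pp) w * y i) -
                 tdelta (x k, sA (q k (\<psi> (y k * b * x i)) * q i pp) (w * y i)) \<in> fs.span ?R"
            using L3[of sA "q k (\<psi> (y k * b * x i))" "x k" "sA (q i pp) w * y i" sA] by simp
        qed
        show "tdelta (b * x i, sA (q i pp) w * y i) - (\<Sum>k<n. tdelta (x k, sA (q k (\<psi> (y k * b * x i)) * q i pp) (w * y i)))
             \<in> fs.span ?R"
          by (rule sp_trans[OF s1 s2])
      qed
      then show ?thesis unfolding T_def by (subst (asm) sum.swap)
    qed
    have rhs: "(\<Sum>i<n. tdelta (x i, sA (q i pp) w * y i * b)) - T \<in> fs.span ?R"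
    proof -
      have "(\<Sum>i<n. tdelta (x i, sA (q i pp) w * y i * b)) -
            (\<Sum>i<n. \<Sum>k<n. tdelta (x i, sA (q i pp * q k (\<psi> (y i * b * x k))) (w * y k))) \<in> fs.span ?R"
      proof (rule sp_sum)
        fix i assume "i \<in> {..<n}"
        have e2: "sA (q i pp) w * y i * b = (\<Sum>k<n. sA (q i pp * q k (\<psi> (y i * b * x k))) (w * y k))"
        proof -
          have "sA (q i pp) w * y i * b = sA (q i pp) w * (\<Sum>k<n. sA (q k (\<psi> (y i * b * x k))) (y k))"
            using id2[of "y i * b"] by (simp add: mult.assoc)
          also have "\<dots> = (\<Sum>k<n. sA (q i pp * q k (\<psi> (y i * b * x k))) (w * y k))"
            by (simp add: sum_distrib_left algL[symmetric] algR[symmetric] module.scale_scale[OF msA] mult.commute)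
          finally show ?thesis .
        qed
        show "tdelta (x i, sA (q i pp) w * y i * b) - (\<Sum>k<n. tdelta (x i, sA (q i pp * q k (\<psi> (y i * b * x k))) (w * y k)))
             \<in> fs.span ?R"
          unfolding e2 by (rule L2[OF msA msA]) simp
      qed
      moreover have "(\<Sum>i<n. \<Sum>k<n. tdelta (x i, sA (q i pp * q k (\<psi> (y i * b * x k))) (w * y k))) = T"
        unfolding T_def
      proof (intro sum.cong refl)
        fix i k assume "i \<in> {..<n}" "k \<in> {..<n}"
        then have "q i pp * q k (\<psi> (y i * b * x k)) = q i (\<psi> (y i * b * x k)) * q k pp"
          using inv_comm[OF inv qQ qQ, of i k "\<psi> (y i * b * x k)" pp] by auto
        then show "tdelta (x i, sA (q i pp * q k (\<psi> (y i * b * x k))) (w * y k)) =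
                   tdelta (x i, sA (q i (\<psi> (y i * b * x k)) * q k pp) (w * y k))" by simp
      qed
      ultimately show ?thesis by simp
    qed
    show ?thesis using fs.span_diff[OF lhs rhs] by simp
  qed
  have fs_map: "formal_sum (map f zs) = (\<Sum>w\<leftarrow>zs. tdelta (f w))" for f and zs :: "('a \<times> 'a) list"
    by (simp add: formal_sum_def o_def)
  define es where "es = concat (map (\<lambda>i. map (\<lambda>j. (x i, sA (q i (p j)) (a j) * y i)) [0..<m]) [0..<n])"
  show ?thesis unfolding separable_algebra_def
  proof (intro exI[of _ es] conjI allI)
    show "(\<Sum>(u,v)\<leftarrow>es. u * v) = 1"
      unfolding es_def sum_list_concat_idx using one by (simp add: mult.assoc)
    fix b
    show "tensor_eq sA UNIV sA UNIV (map (\<lambda>(u,v). (b * u, v)) es) (map (\<lambda>(u,v). (u, v * b)) es)"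
      unfolding tensor_eq_def
    proof (intro conjI)
      have c1: "formal_sum (map (\<lambda>(u,v). (b * u, v)) es) = (\<Sum>j<m. \<Sum>i<n. tdelta (b * x i, sA (q i (p j)) (a j) * y i) :: _ \<Rightarrow> 'k)"
        unfolding fs_map es_def sum_list_concat_idx by (subst sum.swap) simp
      have c2: "formal_sum (map (\<lambda>(u,v). (u, v * b)) es) = (\<Sum>j<m. \<Sum>i<n. tdelta (x i, sA (q i (p j)) (a j) * y i * b) :: _ \<Rightarrow> 'k)"
        unfolding fs_map es_def sum_list_concat_idx by (subst sum.swap) simp
      show "(formal_sum (map (\<lambda>(u,v). (b * u, v)) es) - formal_sum (map (\<lambda>(u,v). (u, v * b)) es) :: _ \<Rightarrow> 'k)
          \<in> fs.span (tensor_relations sA UNIV sA UNIV)"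
        unfolding c1 c2 by (rule sp_sum) (rule key)
    qed auto
  qed
qed

theorem proposition6p1:
  fixes sP :: "'k::comm_ring_1 \<Rightarrow> 'p::ab_group_add \<Rightarrow> 'p"
    and sA :: "'k \<Rightarrow> 'a::ring_1 \<Rightarrow> 'a"
    and \<psi> :: "'a \<Rightarrow> 'p"
    and n :: nat and x y :: "nat \<Rightarrow> 'a" and q :: "nat \<Rightarrow> 'p \<Rightarrow> 'k"
  assumes "invertible_module sP"
    and "k_algebra sA"
    and "P_frobenius sP sA"
    and "frobenius_system sP sA \<psi> n x q y"
  shows "separable_algebra sA \<longleftrightarrow>
    (\<exists>(m::nat) (p::nat \<Rightarrow> 'p) (a::nat \<Rightarrow> 'a).
       (\<Sum>i<n. \<Sum>j<m. x i * sA (q i (p j)) (a j) * y i) = 1)"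
proof
  assume "separable_algebra sA"
  then show "\<exists>(m::nat) (p::nat \<Rightarrow> 'p) (a::nat \<Rightarrow> 'a).
       (\<Sum>i<n. \<Sum>j<m. x i * sA (q i (p j)) (a j) * y i) = 1"
    using dir1[OF assms(2) assms(4)] by blast
next
  assume "\<exists>(m::nat) (p::nat \<Rightarrow> 'p) (a::nat \<Rightarrow> 'a).
       (\<Sum>i<n. \<Sum>j<m. x i * sA (q i (p j)) (a j) * y i) = 1"
  then obtain m :: nat and p :: "nat \<Rightarrow> 'p" and a :: "nat \<Rightarrow> 'a"
    where "(\<Sum>i<n. \<Sum>j<m. x i * sA (q i (p j)) (a j) * y i) = 1" by blast
  then show "separable_algebra sA" by (rule dir2[OF assms(1) assms(2) assms(4)])
qed

end
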